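(* Let $k\geq2$ and let $L=(l_1,\dots,l_k)$ be positive integers with sum $n$ which are generic and reduced, and let $(f_0,\dots,f_{k-1})$ be the $f$-vector of $Tonn^{n,k}(L)$ ($f_{m-1}$ = number of $(m-1)$-dimensional simplices). Then for $1\leq m\leq k$, $$f_{m-1}=n\,\frac{P(k,m)}{m}=n\,\frac{m!}{m}\,S(k,m),$$ where $P(k,m)$ is the number of ordered partitions $I_1\sqcup\dots\sqcup I_m=[k]$ into $m$ nonempty blocks and $S(k,m)$ is the Stirling number of the second kind.
   Context: $L=(l_1,\dots,l_k)$ is generic if for all subsets $I,J\subseteq[k]$, $\sum_{i\in I}l_i=\sum_{j\in J}l_j$ implies $I=J$. $L$ is reduced if $\gcd(l_1,\dots,l_k)=1$. The generalized tonnetz $Tonn^{n,k}(L)$ is the simplicial complex on vertex set $\mathbb{Z}_n$ whose maximal simplices are the sets $\Delta(x;\sigma)=\{x,\,x+l_{\sigma(1)},\dots,x+l_{\sigma(1)}+\dots+l_{\sigma(k-1)}\}$ (sums in $\mathbb{Z}_n$), for $x\in\mathbb{Z}_n$ and $\sigma\in S_k$; its simplices are all subsets of these sets. *)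

theory Defs
  imports "HOL-Combinatorics.Combinatorics"
begin

(* L = (l_1,...,l_k) is represented as a list with L ! i = l_{i+1}; indices i < length L. *)

definition generic :: "nat list \<Rightarrow> bool" where
  "generic L \<longleftrightarrow> (\<forall>I J. I \<subseteq> {..<length L} \<longrightarrow> J \<subseteq> {..<length L} \<longrightarrow>
      (\<Sum>i\<in>I. L ! i) = (\<Sum>j\<in>J. L ! j) \<longrightarrow> I = J)"

definition reduced :: "nat list \<Rightarrow> bool" where
  "reduced L \<longleftrightarrow> Gcd (set L) = 1"

(* Delta(x;sigma) = {x, x + l_sigma(1), ..., x + l_sigma(1) + ... + l_sigma(k-1)} in Z_n,
   with Z_n represented by {0..<n} and arithmetic mod n; sigma a permutation of {..<k}. *)
definition tonnetz_max_simplex :: "nat \<Rightarrow> nat list \<Rightarrow> nat \<Rightarrow> (nat \<Rightarrow> nat) \<Rightarrow> nat set" where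
  "tonnetz_max_simplex n L x \<sigma> =
     {(x + (\<Sum>j<i. L ! (\<sigma> j))) mod n | i. i < length L}"

definition tonnetz :: "nat \<Rightarrow> nat list \<Rightarrow> nat set set" where
  "tonnetz n L = {S. S \<noteq> {} \<and> (\<exists>x \<in> {..<n}. \<exists>\<sigma>. \<sigma> permutes {..<length L} \<and>
                                S \<subseteq> tonnetz_max_simplex n L x \<sigma>)}"

definition fvec :: "nat set set \<Rightarrow> nat \<Rightarrow> nat" where
  "fvec K d = card {S \<in> K. card S = d + 1}"

definition ordered_partitions :: "nat \<Rightarrow> nat \<Rightarrow> nat" where
  "ordered_partitions k m = card {Is :: nat set list. length Is = m \<and>
      (\<forall>i<m. Is ! i \<noteq> {}) \<and>
      (\<forall>i<m. \<forall>j<m. i \<noteq> j \<longrightarrow> Is ! i \<inter> Is ! j = {}) \<and>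
      \<Union>(set Is) = {1..k}}"

end

theory Submission
  imports Defs
begin

definition Surj :: "'a set \<Rightarrow> nat \<Rightarrow> ('a \<Rightarrow> nat) set" where
  "Surj A m = {f. f \<in> A \<rightarrow>\<^sub>E {..<m} \<and> f ` A = {..<m}}"

lemma Surj_finite: "finite A \<Longrightarrow> finite (Surj A m)"
  unfolding Surj_def by (rule finite_subset[of _ "A \<rightarrow>\<^sub>E {..<m}"]) (auto intro: finite_PiE)

lemma Surj_empty: "card (Surj {} m) = (if m = 0 then 1 else 0)"
  unfolding Surj_def by (cases m) auto

lemma Surj_zero: "A \<noteq> {} \<Longrightarrow> Surj A 0 = {}"
  unfolding Surj_def by auto

lemma Surj_insert:
  assumes fin: "finite A" and a: "a \<notin> A"
  shows "card (Surj (insert a A) (Suc p)) = Suc p * card (Surj A (Suc p)) + Suc p * card (Surj A p)"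
proof -
  define X where "X = {f \<in> Surj (insert a A) (Suc p). f ` A = {..<Suc p}}"
  define Y where "Y = {f \<in> Surj (insert a A) (Suc p). f ` A \<noteq> {..<Suc p}}"
  have XY: "Surj (insert a A) (Suc p) = X \<union> Y" "X \<inter> Y = {}" unfolding X_def Y_def by auto
  have finS: "finite (Surj (insert a A) (Suc p))" using fin Surj_finite by blast
  define hX where "hX = (\<lambda>(v::nat, g::'a\<Rightarrow>nat). g(a := v))"
  have X_eq: "X = hX ` ({..<Suc p} \<times> Surj A (Suc p))"
  proof
    show "hX ` ({..<Suc p} \<times> Surj A (Suc p)) \<subseteq> X"
    proof (rule image_subsetI)
      fix z assume "z \<in> {..<Suc p} \<times> Surj A (Suc p)"
      then obtain v g where v: "v \<in> {..<Suc p}" and g: "g \<in> Surj A (Suc p)" and z: "z = (v,g)" by auto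
      have ga: "g ` A = (g(a:=v)) ` A" using a by auto
      show "hX z \<in> X" unfolding z
        using v g a unfolding X_def Surj_def hX_def
        by (auto simp: PiE_iff ga[symmetric])
    qed
  next
    show "X \<subseteq> hX ` ({..<Suc p} \<times> Surj A (Suc p))"
    proof
      fix f assume f: "f \<in> X"
      define g where "g = f(a := undefined)"
      have ga: "g ` A = f ` A" using a unfolding g_def by auto
      have "g \<in> Surj A (Suc p)" using f a unfolding X_def Surj_def g_def
        by (auto simp: PiE_iff ga[unfolded g_def])
      moreover have "f a \<in> {..<Suc p}" using f unfolding X_def Surj_def by auto
      moreover have "f = hX (f a, g)" unfolding hX_def g_def by auto
      ultimately show "f \<in> hX ` ({..<Suc p} \<times> Surj A (Suc p))" by blast
    qed
  qed
  have inj_hX: "inj_on hX ({..<Suc p} \<times> Surj A (Suc p))"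
  proof (rule inj_onI, clarify)
    fix v g v' g' assume g: "g \<in> Surj A (Suc p)" and g': "g' \<in> Surj A (Suc p)"
      and eq: "hX (v, g) = hX (v', g')"
    have "v = v'" using fun_cong[OF eq, of a] unfolding hX_def by auto
    moreover have "g = g'"
    proof
      fix x show "g x = g' x"
      proof (cases "x = a")
        case True then show ?thesis using g g' a unfolding Surj_def by (auto simp: PiE_iff extensional_def)
      next
        case False then show ?thesis using fun_cong[OF eq, of x] unfolding hX_def by auto
      qed
    qed
    ultimately show "v = v' \<and> g = g'" by simp
  qed
  have cX: "card X = Suc p * card (Surj A (Suc p))"
    unfolding X_eq by (simp add: card_image[OF inj_hX] card_cartesian_product)
  define hY where "hY = (\<lambda>(v::nat, g::'a\<Rightarrow>nat). \<lambda>x. if x = a then v else if x \<in> A then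
        (if g x < v then g x else Suc (g x)) else undefined)"
  define uY where "uY = (\<lambda>f::'a\<Rightarrow>nat. (f a, \<lambda>x. if x \<in> A then (if f x < f a then f x else f x - 1) else undefined))"
  have bijY: "bij_betw hY ({..<Suc p} \<times> Surj A p) Y"
  proof (rule bij_betw_byWitness[where f'=uY])
    show "\<forall>z\<in>{..<Suc p} \<times> Surj A p. uY (hY z) = z"
    proof
      fix z assume "z \<in> {..<Suc p} \<times> Surj A p"
      then obtain v g where v: "v \<in> {..<Suc p}" and g: "g \<in> Surj A p" and z: "z = (v,g)" by auto
      have "(\<lambda>x. if x \<in> A then (if hY (v,g) x < hY (v,g) a then hY (v,g) x else hY (v,g) x - 1) else undefined) = g"
      proof
        fix x show "(if x \<in> A then (if hY (v,g) x < hY (v,g) a then hY (v,g) x else hY (v,g) x - 1) else undefined) = g x"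
          using g a unfolding hY_def Surj_def by (auto simp: PiE_iff extensional_def)
      qed
      then show "uY (hY z) = z" unfolding z uY_def using a by (simp add: hY_def)
    qed
    show "\<forall>f\<in>Y. hY (uY f) = f"
    proof
      fix f assume f: "f \<in> Y"
      have fA: "f \<in> insert a A \<rightarrow>\<^sub>E {..<Suc p}" "f ` insert a A = {..<Suc p}" "f ` A \<noteq> {..<Suc p}"
        using f unfolding Y_def Surj_def by auto
      have nfa: "\<forall>x\<in>A. f x \<noteq> f a"
      proof (intro ballI notI)
        fix x assume "x \<in> A" "f x = f a"
        then have "f ` A = f ` insert a A" by (metis image_insert insert_absorb rev_image_eqI)
        with fA(2,3) show False by metis
      qed
      show "hY (uY f) = f"
      proof
        fix x show "hY (uY f) x = f x"
          using fA(1) nfa unfolding hY_def uY_def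
          by (cases "x = a"; cases "x \<in> A") (auto simp: PiE_iff extensional_def)
      qed
    qed
    show "hY ` ({..<Suc p} \<times> Surj A p) \<subseteq> Y"
    proof (rule image_subsetI)
      fix z assume "z \<in> {..<Suc p} \<times> Surj A p"
      then obtain v g where v: "v \<in> {..<Suc p}" and g: "g \<in> Surj A p" and z: "z = (v,g)" by auto
      have gA: "g \<in> A \<rightarrow>\<^sub>E {..<p}" "g ` A = {..<p}" using g unfolding Surj_def by auto
      have img: "hY (v,g) ` A = {..<Suc p} - {v}"
      proof
        show "hY (v,g) ` A \<subseteq> {..<Suc p} - {v}" using gA a v unfolding hY_def by (auto simp: PiE_iff)
      next
        show "{..<Suc p} - {v} \<subseteq> hY (v,g) ` A"
        proof
          fix w assume w: "w \<in> {..<Suc p} - {v}"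
          show "w \<in> hY (v,g) ` A"
          proof (cases "w < v")
            case True
            then have "w \<in> g ` A" using gA(2) w v by auto
            then obtain x where x: "x \<in> A" "g x = w" by auto
            then have "hY (v,g) x = w" using True a unfolding hY_def by auto
            with x show ?thesis by (metis image_eqI)
          next
            case False
            then have "w - 1 \<in> g ` A" using gA(2) w v by auto
            then obtain x where x: "x \<in> A" "g x = w - 1" by auto
            then have "hY (v,g) x = w" using False a w unfolding hY_def by auto
            with x show ?thesis by (metis image_eqI)
          qed
        qed
      qed
      have ha: "hY (v,g) a = v" unfolding hY_def by simp
      have "hY (v,g) ` insert a A = {..<Suc p}" using img ha v by auto
      moreover have "hY (v,g) \<in> insert a A \<rightarrow>\<^sub>E {..<Suc p}"
        using gA a v unfolding hY_def by (auto simp: PiE_iff extensional_def)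
      moreover have "hY (v,g) ` A \<noteq> {..<Suc p}" using img v by auto
      ultimately show "hY z \<in> Y" unfolding z Y_def Surj_def by auto
    qed
    show "uY ` Y \<subseteq> {..<Suc p} \<times> Surj A p"
    proof
      fix z assume "z \<in> uY ` Y"
      then obtain f where f: "f \<in> Y" and z: "z = uY f" by auto
      have fA: "f \<in> insert a A \<rightarrow>\<^sub>E {..<Suc p}" "f ` insert a A = {..<Suc p}" "f ` A \<noteq> {..<Suc p}"
        using f unfolding Y_def Surj_def by auto
      have nfa: "\<forall>x\<in>A. f x \<noteq> f a"
      proof (intro ballI notI)
        fix x assume "x \<in> A" "f x = f a"
        then have "f ` A = f ` insert a A" by (metis image_insert insert_absorb rev_image_eqI)
        with fA(2,3) show False by metis
      qed
      have fa: "f a < Suc p" using fA(1) by auto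
      have fAimg: "f ` A = {..<Suc p} - {f a}"
      proof
        show "f ` A \<subseteq> {..<Suc p} - {f a}" using fA(1) nfa by (auto simp: PiE_iff)
        show "{..<Suc p} - {f a} \<subseteq> f ` A" using fA(2) by auto
      qed
      define g where "g = (\<lambda>x. if x \<in> A then (if f x < f a then f x else f x - 1) else undefined)"
      have "g \<in> A \<rightarrow>\<^sub>E {..<p}"
      proof -
        have "\<forall>x\<in>A. g x < p"
        proof
          fix x assume x: "x \<in> A"
          then have "f x < Suc p" "f x \<noteq> f a" using fA(1) nfa by (auto simp: PiE_iff)
          then show "g x < p" using x fa unfolding g_def by auto
        qed
        then show ?thesis unfolding g_def by (auto simp: PiE_iff extensional_def)
      qed
      moreover have "g ` A = {..<p}"
      proof
        show "g ` A \<subseteq> {..<p}" using \<open>g \<in> A \<rightarrow>\<^sub>E {..<p}\<close> by auto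
        show "{..<p} \<subseteq> g ` A"
        proof
          fix w assume w: "w \<in> {..<p}"
          show "w \<in> g ` A"
          proof (cases "w < f a")
            case True
            then have "w \<in> f ` A" using fAimg w by auto
            then obtain x where "x \<in> A" "f x = w" by auto
            then show ?thesis using True unfolding g_def by (auto intro!: image_eqI[of _ _ x])
          next
            case False
            then have "Suc w \<in> f ` A" using fAimg w by auto
            then obtain x where "x \<in> A" "f x = Suc w" by auto
            then show ?thesis using False unfolding g_def by (auto intro!: image_eqI[of _ _ x])
          qed
        qed
      qed
      ultimately have "g \<in> Surj A p" unfolding Surj_def by auto
      then show "z \<in> {..<Suc p} \<times> Surj A p" using z fa unfolding uY_def g_def by auto
    qed
  qed
  have cY: "card Y = Suc p * card (Surj A p)"
    using bij_betw_same_card[OF bijY] by (simp add: card_cartesian_product)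
  have "card (Surj (insert a A) (Suc p)) = card X + card Y"
    using XY finS by (simp add: card_Un_disjoint)
  then show ?thesis using cX cY by simp
qed

lemma Surj_card: "finite A \<Longrightarrow> card (Surj A m) = fact m * Stirling (card A) m"
proof (induction A arbitrary: m rule: finite_induct)
  case empty then show ?case by (cases m) (auto simp: Surj_empty)
next
  case (insert a A)
  show ?case
  proof (cases m)
    case 0 then show ?thesis by (simp add: Surj_zero insert)
  next
    case (Suc p)
    have "card (Surj (insert a A) m) = Suc p * (fact (Suc p) * Stirling (card A) (Suc p)) + Suc p * (fact p * Stirling (card A) p)"
      using Surj_insert[OF insert(1,2), of p] insert(3) Suc by simp
    also have "\<dots> = fact (Suc p) * Stirling (Suc (card A)) (Suc p)"
      by (simp add: algebra_simps)
    finally show ?thesis using Suc insert by simp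
  qed
qed


lemma OP_unique:
  assumes "length Is = m" "\<forall>i<m. \<forall>j<m. i \<noteq> j \<longrightarrow> Is ! i \<inter> Is ! j = {}"
    "\<Union>(set Is) = {1..k}" "a < k"
  shows "\<exists>!i. i < m \<and> Suc a \<in> Is ! i"
proof -
  have "Suc a \<in> \<Union>(set Is)" using assms(3,4) by auto
  then obtain i where "i < m" "Suc a \<in> Is ! i" using assms(1) by (auto simp: in_set_conv_nth)
  moreover have "\<And>j. j < m \<and> Suc a \<in> Is ! j \<Longrightarrow> j = i"
    using assms(2) calculation by blast
  ultimately show ?thesis by blast
qed

lemma ordered_partitions_Surj: "ordered_partitions k m = card (Surj {..<k} m)"
proof -
  define OPs where "OPs = {Is :: nat set list. length Is = m \<and>
      (\<forall>i<m. Is ! i \<noteq> {}) \<and>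
      (\<forall>i<m. \<forall>j<m. i \<noteq> j \<longrightarrow> Is ! i \<inter> Is ! j = {}) \<and>
      \<Union>(set Is) = {1..k}}"
  define \<phi> where "\<phi> = (\<lambda>f::nat\<Rightarrow>nat. map (\<lambda>i. Suc ` {a. a < k \<and> f a = i}) [0..<m])"
  define \<psi> where "\<psi> = (\<lambda>Is::nat set list. (\<lambda>a\<in>{..<k}. THE i. i < m \<and> Suc a \<in> Is ! i))"
  have "bij_betw \<phi> (Surj {..<k} m) OPs"
  proof (rule bij_betw_byWitness[where f'=\<psi>])
    show "\<forall>f\<in>Surj {..<k} m. \<psi> (\<phi> f) = f"
    proof
      fix f assume f: "f \<in> Surj {..<k} m"
      then have fk: "\<And>a. a < k \<Longrightarrow> f a < m" "\<And>a. a \<ge> k \<Longrightarrow> f a = undefined"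
        unfolding Surj_def by (auto simp: PiE_iff extensional_def)
      show "\<psi> (\<phi> f) = f"
      proof
        fix a show "\<psi> (\<phi> f) a = f a"
        proof (cases "a < k")
          case True
          have "(THE i. i < m \<and> Suc a \<in> \<phi> f ! i) = f a"
            using True fk by (intro the_equality) (auto simp: \<phi>_def)
          then show ?thesis using True unfolding \<psi>_def by simp
        next
          case False then show ?thesis using fk unfolding \<psi>_def by simp
        qed
      qed
    qed
    show "\<forall>Is\<in>OPs. \<phi> (\<psi> Is) = Is"
    proof
      fix Is assume Is: "Is \<in> OPs"
      have P: "length Is = m" "\<forall>i<m. \<forall>j<m. i \<noteq> j \<longrightarrow> Is ! i \<inter> Is ! j = {}"
        "\<Union>(set Is) = {1..k}" using Is unfolding OPs_def by auto
      have key: "\<And>a i. a < k \<Longrightarrow> i < m \<Longrightarrow> \<psi> Is a = i \<longleftrightarrow> Suc a \<in> Is ! i"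
      proof -
        fix a i assume a: "a < k" and i: "i < m"
        have u: "\<exists>!i. i < m \<and> Suc a \<in> Is ! i" using OP_unique[OF P a] .
        have t: "(THE i. i < m \<and> Suc a \<in> Is ! i) < m \<and> Suc a \<in> Is ! (THE i. i < m \<and> Suc a \<in> Is ! i)"
          using theI'[OF u] .
        show "\<psi> Is a = i \<longleftrightarrow> Suc a \<in> Is ! i"
          using u t i a unfolding \<psi>_def by auto
      qed
      show "\<phi> (\<psi> Is) = Is"
      proof (rule nth_equalityI)
        show "length (\<phi> (\<psi> Is)) = length Is" using P by (simp add: \<phi>_def)
      next
        fix i assume "i < length (\<phi> (\<psi> Is))"
        then have i: "i < m" by (simp add: \<phi>_def)
        have "Suc ` {a. a < k \<and> \<psi> Is a = i} = Is ! i"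
        proof
          show "Suc ` {a. a < k \<and> \<psi> Is a = i} \<subseteq> Is ! i" using key i by auto
          show "Is ! i \<subseteq> Suc ` {a. a < k \<and> \<psi> Is a = i}"
          proof
            fix x assume x: "x \<in> Is ! i"
            then have "x \<in> \<Union>(set Is)" using P i nth_mem[of i Is] by blast
            then have "x \<in> {1..k}" using P by simp
            then obtain a where a: "x = Suc a" "a < k" by (cases x) auto
            then show "x \<in> Suc ` {a. a < k \<and> \<psi> Is a = i}" using key[of a i] i x by auto
          qed
        qed
        then show "\<phi> (\<psi> Is) ! i = Is ! i" using i by (simp add: \<phi>_def)
      qed
    qed
    show "\<phi> ` Surj {..<k} m \<subseteq> OPs"
    proof
      fix Is assume "Is \<in> \<phi> ` Surj {..<k} m"
      then obtain f where f: "f \<in> Surj {..<k} m" and Is: "Is = \<phi> f" by auto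
      have fk: "\<And>a. a < k \<Longrightarrow> f a < m" "f ` {..<k} = {..<m}"
        using f unfolding Surj_def by (auto simp: PiE_iff)
      have "length Is = m" using Is by (simp add: \<phi>_def)
      moreover have "\<forall>i<m. Is ! i \<noteq> {}"
      proof (intro allI impI)
        fix i assume i: "i < m"
        then obtain a where "a < k" "f a = i" using fk(2) by (metis imageE lessThan_iff)
        then show "Is ! i \<noteq> {}" using Is i by (auto simp: \<phi>_def)
      qed
      moreover have "\<forall>i<m. \<forall>j<m. i \<noteq> j \<longrightarrow> Is ! i \<inter> Is ! j = {}"
        using Is by (auto simp: \<phi>_def)
      moreover have "\<Union>(set Is) = {1..k}"
      proof -
        have "set Is = (\<lambda>i. Suc ` {a. a < k \<and> f a = i}) ` {..<m}" using Is by (auto simp: \<phi>_def)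
        then have "\<Union>(set Is) = Suc ` {a. a < k \<and> f a < m}" by auto
        also have "\<dots> = Suc ` {..<k}" using fk(1) by auto
        also have "\<dots> = {1..k}" by (rule image_Suc_lessThan)
        finally show ?thesis .
      qed
      ultimately show "Is \<in> OPs" unfolding OPs_def by blast
    qed
    show "\<psi> ` OPs \<subseteq> Surj {..<k} m"
    proof
      fix g assume "g \<in> \<psi> ` OPs"
      then obtain Is where Is: "Is \<in> OPs" and g: "g = \<psi> Is" by auto
      have P: "length Is = m" "\<forall>i<m. Is ! i \<noteq> {}" "\<forall>i<m. \<forall>j<m. i \<noteq> j \<longrightarrow> Is ! i \<inter> Is ! j = {}"
        "\<Union>(set Is) = {1..k}" using Is unfolding OPs_def by auto
      have T: "\<And>a. a < k \<Longrightarrow> g a < m \<and> Suc a \<in> Is ! (g a)"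
      proof -
        fix a assume a: "a < k"
        show "g a < m \<and> Suc a \<in> Is ! (g a)"
          using theI'[OF OP_unique[OF P(1,3,4) a]] a unfolding g \<psi>_def by simp
      qed
      have "g \<in> {..<k} \<rightarrow>\<^sub>E {..<m}" using T unfolding g \<psi>_def by auto
      moreover have "g ` {..<k} = {..<m}"
      proof
        show "g ` {..<k} \<subseteq> {..<m}" using T by auto
        show "{..<m} \<subseteq> g ` {..<k}"
        proof
          fix i assume i: "i \<in> {..<m}"
          then obtain x where x: "x \<in> Is ! i" using P(2) by auto
          then have "x \<in> \<Union>(set Is)" using P i nth_mem[of i Is] by blast
            then have "x \<in> {1..k}" using P by simp
          then obtain a where a: "x = Suc a" "a < k" by (cases x) auto
          have "g a = i"
          proof (rule ccontr)
            assume "g a \<noteq> i"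
            then have "Is ! i \<inter> Is ! (g a) = {}" using P(3) T[OF a(2)] i by auto
            then show False using T[OF a(2)] x a by auto
          qed
          then show "i \<in> g ` {..<k}" using a by auto
        qed
      qed
      ultimately show "g \<in> Surj {..<k} m" unfolding Surj_def by auto
    qed
  qed
  then show ?thesis unfolding ordered_partitions_def OPs_def[symmetric]
    by (simp add: bij_betw_same_card)
qed


lemma exists_perm:
  fixes g :: "nat \<Rightarrow> nat" and k :: nat
  shows "\<exists>\<sigma>. \<sigma> permutes {..<k} \<and> (\<forall>t. \<sigma> ` {..<card {a. a < k \<and> g a < t}} = {a. a < k \<and> g a < t})"
proof -
  define R where "R = (\<lambda>b a. g b < g a \<or> (g b = g a \<and> b < (a::nat)))"
  have Rtrans: "\<And>a b c. R a b \<Longrightarrow> R b c \<Longrightarrow> R a c" unfolding R_def by auto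
  have Rirr: "\<And>a. \<not> R a a" unfolding R_def by auto
  have Rtot: "\<And>a b. a \<noteq> b \<Longrightarrow> R a b \<or> R b a" unfolding R_def by auto
  define rank where "rank = (\<lambda>a. card {b. b < k \<and> R b a})"
  have rank_lt: "\<And>a. a < k \<Longrightarrow> rank a < k"
  proof -
    fix a assume a: "a < k"
    have "{b. b < k \<and> R b a} \<subseteq> {..<k} - {a}" using Rirr by auto
    then have "rank a \<le> card ({..<k} - {a})" unfolding rank_def by (intro card_mono) auto
    then show "rank a < k" using a by simp
  qed
  have rank_mono: "\<And>a b. a < k \<Longrightarrow> b < k \<Longrightarrow> R b a \<Longrightarrow> rank b < rank a"
  proof -
    fix a b assume a: "a < k" and bk: "b < k" and ba: "R b a"
    have "{c. c < k \<and> R c b} \<subset> {c. c < k \<and> R c a}"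
    proof
      show "{c. c < k \<and> R c b} \<subseteq> {c. c < k \<and> R c a}" using Rtrans ba by blast
      have "b < k \<or> True" by simp
      show "{c. c < k \<and> R c b} \<noteq> {c. c < k \<and> R c a}"
      proof
        assume eq: "{c. c < k \<and> R c b} = {c. c < k \<and> R c a}"
        have "b \<in> {c. c < k \<and> R c a}" using ba bk by auto
        then show False using eq Rirr by auto
      qed
    qed
    then show "rank b < rank a" unfolding rank_def by (intro psubset_card_mono) auto
  qed
  have rinj: "inj_on rank {..<k}"
  proof (rule inj_onI)
    fix a b assume a: "a \<in> {..<k}" and b: "b \<in> {..<k}" and e: "rank a = rank b"
    show "a = b"
    proof (rule ccontr)
      assume "a \<noteq> b"
      then have "R a b \<or> R b a" using Rtot by auto
      then show False using rank_mono a b e by (metis lessThan_iff less_irrefl)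
    qed
  qed
  have rimg: "rank ` {..<k} = {..<k}"
    using rank_lt rinj by (intro endo_inj_surj) auto
  have rbij: "bij_betw rank {..<k} {..<k}" using rinj rimg by (simp add: bij_betw_def)
  define \<sigma> where "\<sigma> = (\<lambda>i. if i < k then inv_into {..<k} rank i else i)"
  have "bij_betw (inv_into {..<k} rank) {..<k} {..<k}" using bij_betw_inv_into[OF rbij] .
  then have sbij: "bij_betw \<sigma> {..<k} {..<k}"
    by (rule bij_betw_cong[THEN iffD1, rotated]) (auto simp: \<sigma>_def)
  have perm: "\<sigma> permutes {..<k}" using sbij by (rule bij_imp_permutes) (auto simp: \<sigma>_def)
  have simg: "\<And>i. i \<le> k \<Longrightarrow> \<sigma> ` {..<i} = {a. a < k \<and> rank a < i}"
  proof -
    fix i assume i: "i \<le> k"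
    show "\<sigma> ` {..<i} = {a. a < k \<and> rank a < i}"
    proof
      show "\<sigma> ` {..<i} \<subseteq> {a. a < k \<and> rank a < i}"
      proof
        fix a assume "a \<in> \<sigma> ` {..<i}"
        then obtain j where j: "j < i" "a = \<sigma> j" by auto
        then have jk: "j \<in> rank ` {..<k}" using i rimg by auto
        have "a = inv_into {..<k} rank j" using j i by (simp add: \<sigma>_def)
        moreover have "inv_into {..<k} rank j \<in> {..<k}" using inv_into_into[OF jk] .
        moreover have "rank (inv_into {..<k} rank j) = j" using f_inv_into_f[OF jk] .
        ultimately show "a \<in> {a. a < k \<and> rank a < i}" using j by auto
      qed
      show "{a. a < k \<and> rank a < i} \<subseteq> \<sigma> ` {..<i}"
      proof
        fix a assume a: "a \<in> {a. a < k \<and> rank a < i}"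
        have "\<sigma> (rank a) = a" using a rank_lt rinj by (simp add: \<sigma>_def inv_into_f_f)
        then show "a \<in> \<sigma> ` {..<i}" using a by (metis image_eqI lessThan_iff mem_Collect_eq)
      qed
    qed
  qed
  have "\<forall>t. \<sigma> ` {..<card {a. a < k \<and> g a < t}} = {a. a < k \<and> g a < t}"
  proof
    fix t
    define Wt where "Wt = {a. a < k \<and> g a < t}"
    have cW: "card Wt \<le> k" unfolding Wt_def by (rule card_mono[of "{..<k}", simplified]) auto
    have "{a. a < k \<and> rank a < card Wt} = Wt"
    proof
      show "{a. a < k \<and> rank a < card Wt} \<subseteq> Wt"
      proof (clarify)
        fix a assume a: "a < k" "rank a < card Wt"
        show "a \<in> Wt"
        proof (rule ccontr)
          assume "a \<notin> Wt"
          then have "g a \<ge> t" using a unfolding Wt_def by auto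
          then have "Wt \<subseteq> {b. b < k \<and> R b a}" unfolding Wt_def R_def by auto
          then have "card Wt \<le> rank a" unfolding rank_def by (intro card_mono) auto
          then show False using a by simp
        qed
      qed
      show "Wt \<subseteq> {a. a < k \<and> rank a < card Wt}"
      proof
        fix a assume a: "a \<in> Wt"
        have "{b. b < k \<and> R b a} \<subseteq> Wt - {a}" using a Rirr unfolding Wt_def R_def by auto
        then have "rank a \<le> card (Wt - {a})" unfolding rank_def
          by (intro card_mono) (auto simp: Wt_def)
        also have "\<dots> < card Wt" using a by (intro card_Diff1_less) (auto simp: Wt_def)
        finally show "a \<in> {a. a < k \<and> rank a < card Wt}" using a by (auto simp: Wt_def)
      qed
    qed
    then show "\<sigma> ` {..<card {a. a < k \<and> g a < t}} = {a. a < k \<and> g a < t}"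
      using simg[OF cW] unfolding Wt_def by simp
  qed
  then show ?thesis using perm by blast
qed


lemma mod_add_cancel_less:
  fixes y a b n :: nat
  assumes "a < n" "b < n" "(y + a) mod n = (y + b) mod n"
  shows "a = b"
proof (rule ccontr)
  assume ne: "a \<noteq> b"
  have "int ((y + a) mod n) = int ((y + b) mod n)" using assms(3) by simp
  then have "(int y + int a) mod int n = (int y + int b) mod int n" by (simp add: zmod_int)
  then have "int n dvd (int y + int a) - (int y + int b)" by (simp add: mod_eq_dvd_iff)
  then have "int n dvd int a - int b" by simp
  then have "\<bar>int n\<bar> \<le> \<bar>int a - int b\<bar>" using ne by (intro dvd_imp_le_int) auto
  then show False using assms(1,2) by simp
qed

locale tsetup =
  fixes L :: "nat list" and k n m :: nat
  assumes len: "length L = k" and pos: "\<forall>l\<in>set L. l > 0" and sumL: "sum_list L = n"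
    and gen: "generic L" and m1: "1 \<le> m" and mk: "m \<le> k"
begin

definition lw :: "nat set \<Rightarrow> nat" where "lw U = (\<Sum>a\<in>U. L ! a)"
definition W :: "(nat \<Rightarrow> nat) \<Rightarrow> nat \<Rightarrow> nat set" where "W f t = {a. a < k \<and> f a < t}"
definition pt :: "nat \<Rightarrow> nat set \<Rightarrow> nat" where "pt y U = (y + lw U) mod n"
definition Phi :: "nat \<Rightarrow> (nat \<Rightarrow> nat) \<Rightarrow> nat set" where "Phi y f = (\<lambda>t. pt y (W f t)) ` {..<m}"

lemma n_eq: "n = lw {..<k}"
  using sumL len by (simp add: lw_def sum_list_sum_nth atLeast0LessThan)

lemma Lpos: "a < k \<Longrightarrow> L ! a > 0"
  using pos len nth_mem[of a L] by simp

lemma n_pos: "n > 0"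
proof -
  have "0 < k" using m1 mk by simp
  then have "L ! 0 \<le> lw {..<k}" unfolding lw_def
    by (intro member_le_sum) auto
  then show ?thesis using Lpos[of 0] \<open>0 < k\<close> n_eq by simp
qed

lemma gen': "U \<subseteq> {..<k} \<Longrightarrow> V \<subseteq> {..<k} \<Longrightarrow> lw U = lw V \<Longrightarrow> U = V"
  using gen len unfolding generic_def lw_def by auto

lemma lw_le: "U \<subseteq> {..<k} \<Longrightarrow> lw U \<le> n"
  unfolding n_eq lw_def by (rule sum_mono2) auto

lemma lw_less: "U \<subseteq> {..<k} \<Longrightarrow> U \<noteq> {..<k} \<Longrightarrow> lw U < n"
  using lw_le[of U] gen'[of U "{..<k}"] n_eq by fastforce

lemma lw_union: "U \<subseteq> {..<k} \<Longrightarrow> V \<subseteq> {..<k} \<Longrightarrow> U \<inter> V = {} \<Longrightarrow> lw (U \<union> V) = lw U + lw V"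
  unfolding lw_def by (rule sum.union_disjoint) (auto intro: finite_subset)

definition Prop :: "nat set set" where "Prop = {U. U \<subseteq> {..<k} \<and> U \<noteq> {..<k}}"

lemma pt_inj: "inj_on (pt y) Prop"
proof (rule inj_onI)
  fix U V assume U: "U \<in> Prop" and V: "V \<in> Prop" and e: "pt y U = pt y V"
  have "lw U = lw V" using mod_add_cancel_less[of "lw U" n "lw V" y] lw_less U V e
    unfolding Prop_def pt_def by auto
  then show "U = V" using gen' U V unfolding Prop_def by auto
qed

lemma pt_less: "pt y U < n" unfolding pt_def using n_pos by simp

context
  fixes f assumes fS: "f \<in> Surj {..<k} m"
begin

lemma fS1: "a < k \<Longrightarrow> f a < m" using fS unfolding Surj_def by auto
lemma fS2: "t < m \<Longrightarrow> \<exists>a<k. f a = t"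
proof -
  assume t: "t < m"
  have "t \<in> f ` {..<k}" using fS t unfolding Surj_def by auto
  then show ?thesis by auto
qed
lemma fS3: "\<not> a < k \<Longrightarrow> f a = undefined" using fS unfolding Surj_def by (auto simp: PiE_iff extensional_def)

lemma W_sub: "W f t \<subseteq> {..<k}" unfolding W_def by auto

lemma W_Prop: "t < m \<Longrightarrow> W f t \<in> Prop"
proof -
  assume t: "t < m"
  obtain a where "a < k" "f a = t" using fS2[OF t] by auto
  then have "a \<notin> W f t" unfolding W_def by auto
  then show ?thesis using W_sub \<open>a < k\<close> unfolding Prop_def by auto
qed

lemma W_inj: "inj_on (W f) {..<m}"
proof (rule inj_onI)
  fix s t assume s: "s \<in> {..<m}" and t: "t \<in> {..<m}" and e: "W f s = W f t"
  show "s = t"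
  proof (rule ccontr)
    assume "s \<noteq> t"
    then consider "s < t" | "t < s" by linarith
    then show False
    proof cases
      case 1
      obtain a where "a < k" "f a = s" using fS2 s by auto
      then have "a \<in> W f t" "a \<notin> W f s" using 1 unfolding W_def by auto
      then show False using e by simp
    next
      case 2
      obtain a where "a < k" "f a = t" using fS2 t by auto
      then have "a \<in> W f s" "a \<notin> W f t" using 2 unfolding W_def by auto
      then show False using e by simp
    qed
  qed
qed

lemma W0: "W f 0 = {}" unfolding W_def by auto

lemma Phi_alt: "Phi y f = pt y ` (W f ` {..<m})" unfolding Phi_def by auto

lemma Phi_card: "card (Phi y f) = m"
proof -
  have "inj_on (pt y) (W f ` {..<m})" using pt_inj by (rule inj_on_subset) (use W_Prop in auto)
  then have "card (Phi y f) = card (W f ` {..<m})" unfolding Phi_alt by (rule card_image)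
  also have "\<dots> = m" using W_inj by (simp add: card_image)
  finally show ?thesis .
qed

lemma y_in_Phi: "y < n \<Longrightarrow> y \<in> Phi y f"
proof -
  assume y: "y < n"
  have "pt y (W f 0) = y" using y unfolding W0 pt_def lw_def by simp
  moreover have "(0::nat) \<in> {..<m}" using m1 by simp
  ultimately show ?thesis unfolding Phi_def by (metis image_eqI)
qed

lemma recover: "a < k \<Longrightarrow> card {U \<in> W f ` {..<m}. a \<notin> U} = Suc (f a)"
proof -
  assume a: "a < k"
  have e1: "{U \<in> W f ` {..<m}. a \<notin> U} = W f ` {t. t < m \<and> a \<notin> W f t}" by blast
  have e2: "{t. t < m \<and> a \<notin> W f t} = {..f a}"
    using a fS1[OF a] unfolding W_def by auto
  have eq: "{U \<in> W f ` {..<m}. a \<notin> U} = W f ` {..f a}" using e1 e2 by simp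
  have sub: "{..f a} \<subseteq> {..<m}" using fS1[OF a] by auto
  have inj: "inj_on (W f) {..f a}" using inj_on_subset[OF W_inj sub] .
  have c: "card (W f ` {..f a}) = Suc (f a)" using card_image[OF inj] by simp
  show ?thesis unfolding eq using c .
qed

lemma Phi_tonnetz: "y < n \<Longrightarrow> Phi y f \<in> tonnetz n L"
proof -
  assume y: "y < n"
  obtain \<sigma> where \<sigma>: "\<sigma> permutes {..<k}" "\<forall>t. \<sigma> ` {..<card {a. a < k \<and> f a < t}} = {a. a < k \<and> f a < t}"
    using exists_perm[of k f] by blast
  have sinj: "inj_on \<sigma> {..<k}" using permutes_inj_on[OF \<sigma>(1)] .
  have sub: "Phi y f \<subseteq> tonnetz_max_simplex n L y \<sigma>"
  proof
    fix z assume "z \<in> Phi y f"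
    then obtain t where t: "t < m" "z = pt y (W f t)" unfolding Phi_def by auto
    define i where "i = card (W f t)"
    have "W f t \<subset> {..<k}" using W_Prop[OF t(1)] unfolding Prop_def by auto
    then have "card (W f t) < card {..<k}" by (intro psubset_card_mono) auto
    then have ik: "i < k" unfolding i_def by simp
    have si: "\<sigma> ` {..<i} = W f t" unfolding i_def using \<sigma>(2)[rule_format, of t] by (simp only: W_def)
    have inj: "inj_on \<sigma> {..<i}" using inj_on_subset[OF sinj, of "{..<i}"] ik by auto
    have "(\<Sum>a\<in>\<sigma> ` {..<i}. L ! a) = (\<Sum>j<i. L ! (\<sigma> j))"
      using sum.reindex[OF inj, of "\<lambda>a. L ! a"] by (simp add: comp_def)
    then have "(\<Sum>j<i. L ! (\<sigma> j)) = lw (W f t)" using si by (simp add: lw_def)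
    then have "z = (y + (\<Sum>j<i. L ! (\<sigma> j))) mod n" using t(2) by (simp add: pt_def)
    then have "\<exists>i'. z = (y + (\<Sum>j<i'. L ! (\<sigma> j))) mod n \<and> i' < length L" using ik len by blast
    then show "z \<in> tonnetz_max_simplex n L y \<sigma>" unfolding tonnetz_max_simplex_def by blast
  qed
  have ne: "Phi y f \<noteq> {}" using y_in_Phi[OF y] by auto
  have "\<exists>x\<in>{..<n}. \<exists>\<sigma>. \<sigma> permutes {..<length L} \<and> Phi y f \<subseteq> tonnetz_max_simplex n L x \<sigma>"
    using y \<sigma>(1) len sub by (intro bexI[of _ y] exI[of _ \<sigma>]) auto
  then show ?thesis using ne unfolding tonnetz_def by (intro CollectI conjI)
qed

end

lemma Phi_inj:
  assumes f1: "f1 \<in> Surj {..<k} m" and f2: "f2 \<in> Surj {..<k} m" and e: "Phi y f1 = Phi y f2"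
  shows "f1 = f2"
proof -
  have s1: "W f1 ` {..<m} \<subseteq> Prop" using W_Prop[OF f1] by auto
  have s2: "W f2 ` {..<m} \<subseteq> Prop" using W_Prop[OF f2] by auto
  from e have "pt y ` (W f1 ` {..<m}) = pt y ` (W f2 ` {..<m})" unfolding Phi_alt[OF f1] Phi_alt[OF f2] .
  then have eqW: "W f1 ` {..<m} = W f2 ` {..<m}" using inj_on_image_eq_iff[OF pt_inj s1 s2] by blast
  show "f1 = f2"
  proof
    fix a show "f1 a = f2 a"
    proof (cases "a < k")
      case True
      have "card {U \<in> W f2 ` {..<m}. a \<notin> U} = Suc (f1 a)" using recover[OF f1 True] unfolding eqW .
      then show ?thesis using recover[OF f2 True] by simp
    next
      case False then show ?thesis using fS3[OF f1] fS3[OF f2] by simp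
    qed
  qed
qed

end

lemma mod_sub_helper:
  fixes x t0 m :: nat assumes "x < m" "t0 < m"
  shows "(x + m - t0) mod m = (if t0 \<le> x then x - t0 else x + m - t0)"
proof (cases "t0 \<le> x")
  case True
  then have "x + m - t0 = (x - t0) + m" by simp
  then have "(x + m - t0) mod m = (x - t0) mod m" by simp
  then show ?thesis using True assms by simp
next
  case False then show ?thesis using assms by simp
qed

lemma mod_add_helper:
  fixes s t0 m :: nat assumes "s < m" "t0 < m"
  shows "(t0 + s) mod m = (if t0 + s < m then t0 + s else t0 + s - m)"
proof (cases "t0 + s < m")
  case True then show ?thesis by simp
next
  case False
  then have "(t0 + s) mod m = (t0 + s - m) mod m" by (simp add: le_mod_geq)
  then show ?thesis using False assms by simp
qed

context tsetup begin

lemma rot: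
  assumes fS: "f \<in> Surj {..<k} m" and y: "y < n" and t0: "t0 < m"
  shows "(\<lambda>a\<in>{..<k}. (f a + m - t0) mod m) \<in> Surj {..<k} m \<and>
         Phi (pt y (W f t0)) (\<lambda>a\<in>{..<k}. (f a + m - t0) mod m) = Phi y f"
proof -
  define f' where "f' = (\<lambda>a\<in>{..<k}. (f a + m - t0) mod m)"
  define z where "z = pt y (W f t0)"
  have mpos: "0 < m" using m1 by simp
  have f'a: "\<And>a. a < k \<Longrightarrow> f' a = (if t0 \<le> f a then f a - t0 else f a + m - t0)"
    unfolding f'_def using mod_sub_helper[OF fS1[OF fS] t0] by simp
  have f'S: "f' \<in> Surj {..<k} m"
  proof -
    have "f' \<in> {..<k} \<rightarrow>\<^sub>E {..<m}" unfolding f'_def using mpos by auto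
    moreover have "f' ` {..<k} = {..<m}"
    proof
      show "f' ` {..<k} \<subseteq> {..<m}" unfolding f'_def using mpos by auto
      show "{..<m} \<subseteq> f' ` {..<k}"
      proof
        fix s assume s: "s \<in> {..<m}"
        define t where "t = (t0 + s) mod m"
        have tm: "t < m" unfolding t_def using mpos by simp
        obtain a where a: "a < k" "f a = t" using fS2[OF fS tm] by auto
        have "f' a = s" using f'a[OF a(1)] a(2) mod_add_helper[of s m t0] s t0 unfolding t_def
          by (auto split: if_splits)
        then show "s \<in> f' ` {..<k}" using a(1) by (metis image_eqI lessThan_iff)
      qed
    qed
    ultimately show ?thesis unfolding Surj_def by auto
  qed
  have key: "\<And>s. s < m \<Longrightarrow> pt z (W f' s) = pt y (W f ((t0 + s) mod m))"
  proof -
    fix s assume s: "s < m"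
    have ptz: "\<And>X. pt z X = (y + lw (W f t0) + lw X) mod n"
      unfolding z_def pt_def by (simp add: mod_add_left_eq)
    show "pt z (W f' s) = pt y (W f ((t0 + s) mod m))"
    proof (cases "t0 + s < m")
      case True
      have ts: "(t0 + s) mod m = t0 + s" using True by simp
      have eqW: "W f' s = W f (t0 + s) - W f t0"
      proof -
        have "\<And>a. a < k \<Longrightarrow> (f' a < s) = (t0 \<le> f a \<and> f a < t0 + s)"
          using f'a True by auto
        then show ?thesis unfolding W_def by auto
      qed
      have sub: "W f t0 \<subseteq> W f (t0 + s)" unfolding W_def by auto
      have "lw (W f (t0 + s)) = lw (W f t0) + lw (W f (t0 + s) - W f t0)"
      proof -
        have "W f (t0 + s) = W f t0 \<union> (W f (t0 + s) - W f t0)" using sub by auto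
        then have "lw (W f (t0 + s)) = lw (W f t0 \<union> (W f (t0 + s) - W f t0))" by simp
        also have "\<dots> = lw (W f t0) + lw (W f (t0 + s) - W f t0)"
          by (rule lw_union) (auto simp: W_def)
        finally show ?thesis .
      qed
      then show ?thesis unfolding ts ptz eqW by (simp add: pt_def add.assoc)
    next
      case False
      define t where "t = t0 + s - m"
      have ts: "(t0 + s) mod m = t" using mod_add_helper[OF s t0] False unfolding t_def by simp
      have tt0: "t < t0" unfolding t_def using False s by simp
      have eqW: "W f' s = ({..<k} - W f t0) \<union> W f t"
      proof -
        have "\<And>a. a < k \<Longrightarrow> (f' a < s) = (t0 \<le> f a \<or> f a < t)"
        proof -
          fix a assume a: "a < k"
          have "f a < m" using fS1[OF fS a] .
          then show "(f' a < s) = (t0 \<le> f a \<or> f a < t)"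
            using f'a[OF a] False tt0 t0 s unfolding t_def by auto
        qed
        then show ?thesis unfolding W_def by auto
      qed
      have sub: "W f t \<subseteq> W f t0" unfolding W_def using tt0 by auto
      have l1: "lw (({..<k} - W f t0) \<union> W f t) = lw ({..<k} - W f t0) + lw (W f t)"
        by (rule lw_union) (use sub in \<open>auto simp: W_def\<close>)
      have l2: "lw (W f t0) + lw ({..<k} - W f t0) = n"
      proof -
        have "lw (W f t0 \<union> ({..<k} - W f t0)) = lw (W f t0) + lw ({..<k} - W f t0)"
          by (rule lw_union) (auto simp: W_def)
        moreover have "W f t0 \<union> ({..<k} - W f t0) = {..<k}" unfolding W_def by auto
        ultimately show ?thesis using n_eq by simp
      qed
      have e: "y + lw (W f t0) + lw (W f' s) = (y + lw (W f t)) + n"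
        unfolding eqW l1 using l2 by simp
      have "(y + lw (W f t0) + lw (W f' s)) mod n = (y + lw (W f t)) mod n"
        unfolding e by simp
      then show ?thesis unfolding ts ptz by (simp add: pt_def)
    qed
  qed
  have img: "(\<lambda>s. (t0 + s) mod m) ` {..<m} = {..<m}"
  proof
    show "(\<lambda>s. (t0 + s) mod m) ` {..<m} \<subseteq> {..<m}" using mpos by auto
    show "{..<m} \<subseteq> (\<lambda>s. (t0 + s) mod m) ` {..<m}"
    proof
      fix t assume t: "t \<in> {..<m}"
      define s where "s = (t + m - t0) mod m"
      have sm: "s < m" unfolding s_def using mpos by simp
      have "(t0 + s) mod m = t"
        using mod_sub_helper[of t m t0] mod_add_helper[OF sm t0] t t0 unfolding s_def
        by (auto split: if_splits)
      then show "t \<in> (\<lambda>s. (t0 + s) mod m) ` {..<m}" using sm by (metis image_eqI lessThan_iff)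
    qed
  qed
  have "Phi z f' = (\<lambda>s. pt y (W f ((t0 + s) mod m))) ` {..<m}"
    unfolding Phi_def using key by (intro image_cong) auto
  also have "\<dots> = (\<lambda>t. pt y (W f t)) ` ((\<lambda>s. (t0 + s) mod m) ` {..<m})"
    by (simp add: image_image)
  also have "\<dots> = Phi y f" unfolding img Phi_def ..
  finally show ?thesis using f'S unfolding f'_def z_def by simp
qed

definition Dom where "Dom = {..<n} \<times> Surj {..<k} m"

lemma fiber:
  assumes fS: "f \<in> Surj {..<k} m" and y: "y < n"
  shows "card {p \<in> Dom. Phi (fst p) (snd p) = Phi y f} = m"
proof -
  define F where "F = {p \<in> Dom. Phi (fst p) (snd p) = Phi y f}"
  have "bij_betw fst F (Phi y f)"
    unfolding bij_betw_def
  proof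
    show "inj_on fst F"
    proof (rule inj_onI)
      fix p q assume p: "p \<in> F" and q: "q \<in> F" and e: "fst p = fst q"
      have "snd p \<in> Surj {..<k} m" "snd q \<in> Surj {..<k} m" using p q unfolding F_def Dom_def by auto
      moreover have "Phi (fst p) (snd p) = Phi (fst p) (snd q)" using p q e unfolding F_def by auto
      ultimately have "snd p = snd q" by (rule Phi_inj)
      then show "p = q" using e by (simp add: prod_eq_iff)
    qed
    show "fst ` F = Phi y f"
    proof
      show "fst ` F \<subseteq> Phi y f"
      proof
        fix x assume "x \<in> fst ` F"
        then obtain p where p: "p \<in> F" "x = fst p" by auto
        have "snd p \<in> Surj {..<k} m" "fst p < n" using p unfolding F_def Dom_def by auto
        then have "fst p \<in> Phi (fst p) (snd p)" by (rule y_in_Phi)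
        then show "x \<in> Phi y f" using p unfolding F_def by auto
      qed
      show "Phi y f \<subseteq> fst ` F"
      proof
        fix x assume "x \<in> Phi y f"
        then obtain t0 where t0: "t0 < m" "x = pt y (W f t0)" unfolding Phi_def by auto
        define f' where "f' = (\<lambda>a\<in>{..<k}. (f a + m - t0) mod m)"
        have R: "f' \<in> Surj {..<k} m" "Phi x f' = Phi y f"
          using rot[OF fS y t0(1)] t0(2) unfolding f'_def by auto
        have "x < n" using t0(2) pt_less by simp
        then have "(x, f') \<in> F" using R unfolding F_def Dom_def by auto
        then show "x \<in> fst ` F" by (metis fst_conv image_eqI)
      qed
    qed
  qed
  then have "card F = card (Phi y f)" by (rule bij_betw_same_card)
  then show ?thesis using Phi_card[OF fS] unfolding F_def by simp
qed

end

context tsetup begin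

lemma onto:
  assumes S: "S \<in> tonnetz n L" and c: "card S = m"
  shows "\<exists>y<n. \<exists>f\<in>Surj {..<k} m. Phi y f = S"
proof -
  obtain x \<sigma> where x: "x < n" and \<sigma>: "\<sigma> permutes {..<k}" and Ssub: "S \<subseteq> tonnetz_max_simplex n L x \<sigma>"
    using S len unfolding tonnetz_def by auto
  have sbij: "bij_betw \<sigma> {..<k} {..<k}" using permutes_imp_bij[OF \<sigma>] .
  have sinj: "inj_on \<sigma> {..<k}" using sbij by (simp add: bij_betw_def)
  define p where "p = (\<lambda>i. (x + (\<Sum>j<i. L ! (\<sigma> j))) mod n)"
  have sumlw: "\<And>i. i \<le> k \<Longrightarrow> (\<Sum>j<i. L ! (\<sigma> j)) = lw (\<sigma> ` {..<i})"
  proof -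
    fix i assume i: "i \<le> k"
    have inj: "inj_on \<sigma> {..<i}" using inj_on_subset[OF sinj, of "{..<i}"] i by auto
    show "(\<Sum>j<i. L ! (\<sigma> j)) = lw (\<sigma> ` {..<i})"
      using sum.reindex[OF inj, of "\<lambda>a. L ! a"] by (simp add: comp_def lw_def)
  qed
  have p_pt: "\<And>i. i \<le> k \<Longrightarrow> p i = pt x (\<sigma> ` {..<i})" unfolding p_def pt_def using sumlw by simp
  have sProp: "\<And>i. i < k \<Longrightarrow> \<sigma> ` {..<i} \<in> Prop"
  proof -
    fix i assume i: "i < k"
    have "card (\<sigma> ` {..<i}) = i" using inj_on_subset[OF sinj, of "{..<i}"] i by (simp add: card_image)
    then have "\<sigma> ` {..<i} \<noteq> {..<k}" using i by auto
    moreover have "\<sigma> ` {..<i} \<subseteq> {..<k}" using sbij i by (auto simp: bij_betw_def)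
    ultimately show "\<sigma> ` {..<i} \<in> Prop" unfolding Prop_def by auto
  qed
  have p_inj: "inj_on p {..<k}"
  proof (rule inj_onI)
    fix i j assume i: "i \<in> {..<k}" and j: "j \<in> {..<k}" and e: "p i = p j"
    have "pt x (\<sigma> ` {..<i}) = pt x (\<sigma> ` {..<j})" using e p_pt i j by simp
    then have "\<sigma> ` {..<i} = \<sigma> ` {..<j}" using inj_onD[OF pt_inj _ sProp sProp] i j by auto
    then have "{..<i} = {..<j}" using inj_on_image_eq_iff[OF sinj] i j by auto
    then show "i = j" by (metis lessThan_eq_iff)
  qed
  have maxeq: "tonnetz_max_simplex n L x \<sigma> = p ` {..<k}"
    unfolding tonnetz_max_simplex_def p_def using len by auto
  define I where "I = {i. i < k \<and> p i \<in> S}"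
  have SI: "S = p ` I" using Ssub maxeq unfolding I_def by auto
  have Ik: "I \<subseteq> {..<k}" unfolding I_def by auto
  have cI: "card I = m" using c SI card_image[OF inj_on_subset[OF p_inj Ik]] by simp
  have finI: "finite I" using Ik finite_subset by auto
  define e where "e = (\<lambda>t. sorted_list_of_set I ! t)"
  have e_lt: "\<And>t t'. t < t' \<Longrightarrow> t' < m \<Longrightarrow> e t < e t'"
  proof -
    fix t t' assume "t < t'" "t' < m"
    then show "e t < e t'" unfolding e_def
      using sorted_wrt_nth_less[OF strict_sorted_list_of_set, of t t' I] cI by simp
  qed
  have e_le: "\<And>t t'. t < m \<Longrightarrow> t' < m \<Longrightarrow> (e t \<le> e t') = (t \<le> t')"
    by (metis e_lt le_eq_less_or_eq linorder_not_le)
  have e_img: "e ` {..<m} = I"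
  proof -
    have "e ` {..<m} = set (sorted_list_of_set I)" unfolding e_def using cI
      by (auto simp: in_set_conv_nth)
    then show ?thesis using finI by simp
  qed
  have ek: "\<And>t. t < m \<Longrightarrow> e t < k" using e_img Ik by auto
  have m0: "0 < m" using m1 by simp
  define i0 where "i0 = e 0"
  have i0le: "\<And>t. t < m \<Longrightarrow> i0 \<le> e t" unfolding i0_def using e_le m0 by simp
  define C where "C = (\<lambda>q. {t. t < m \<and> e t \<le> q})"
  define g where "g = (\<lambda>q. if q < i0 then m - 1 else card (C q) - 1)"
  define f where "f = (\<lambda>a\<in>{..<k}. g (inv_into {..<k} \<sigma> a))"
  have f\<sigma>: "\<And>q. q < k \<Longrightarrow> f (\<sigma> q) = g q"
  proof -
    fix q assume q: "q < k"
    have "\<sigma> q < k" using sbij q by (auto simp: bij_betw_def)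
    then show "f (\<sigma> q) = g q" unfolding f_def using inv_into_f_f[OF sinj] q by simp
  qed
  have Cfin: "\<And>q. card (C q) \<le> m" unfolding C_def by (rule card_mono[of "{..<m}", simplified]) auto
  have Ct: "\<And>t. t < m \<Longrightarrow> C (e t) = {..t}"
    unfolding C_def using e_le by auto
  have glt: "\<And>q. g q < m"
  proof -
    fix q have "card (C q) \<le> m" using Cfin .
    then show "g q < m" unfolding g_def using m0 by auto
  qed
  have gW: "\<And>t. t < m \<Longrightarrow> {q. q < k \<and> g q < t} = {i0..<e t}"
  proof -
    fix t assume t: "t < m"
    show "{q. q < k \<and> g q < t} = {i0..<e t}"
    proof (intro set_eqI iffI)
      fix q assume "q \<in> {q. q < k \<and> g q < t}"
      then have q: "q < k" "g q < t" by auto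
      have "\<not> q < i0" using q t unfolding g_def by auto
      moreover have "q < e t"
      proof (rule ccontr)
        assume "\<not> q < e t"
        then have etq: "e t \<le> q" by simp
        have "{..t} \<subseteq> C q"
        proof
          fix t' assume "t' \<in> {..t}"
          then have "t' < m" "e t' \<le> e t" using e_le[of t' t] t by auto
          then show "t' \<in> C q" using etq unfolding C_def by auto
        qed
        then have "Suc t \<le> card (C q)" using card_mono[of "C q" "{..t}"] unfolding C_def by auto
        then show False using q(2) \<open>\<not> q < i0\<close> unfolding g_def by auto
      qed
      ultimately show "q \<in> {i0..<e t}" by auto
    next
      fix q assume "q \<in> {i0..<e t}"
      then have q: "i0 \<le> q" "q < e t" by auto
      have "q < k" using q ek[OF t] by simp
      have t0: "t \<noteq> 0"
      proof
        assume "t = 0" then show False using q unfolding i0_def by simp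
      qed
      have "C q \<subseteq> {..<t}"
      proof
        fix t' assume "t' \<in> C q"
        then have t': "t' < m" "e t' \<le> q" unfolding C_def by auto
        then have "\<not> e t \<le> e t'" using q by simp
        then show "t' \<in> {..<t}" using e_le[OF t t'(1)] by simp
      qed
      then have "card (C q) \<le> t" using card_mono[of "{..<t}" "C q"] by simp
      then have "g q < t" using q t0 unfolding g_def by auto
      then show "q \<in> {q. q < k \<and> g q < t}" using \<open>q < k\<close> by simp
    qed
  qed
  have Wf: "\<And>t. t < m \<Longrightarrow> W f t = \<sigma> ` {i0..<e t}"
  proof -
    fix t assume t: "t < m"
    have "W f t = \<sigma> ` {q. q < k \<and> g q < t}"
    proof (intro set_eqI iffI)
      fix a assume "a \<in> W f t"
      then have a: "a < k" "f a < t" unfolding W_def by auto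
      have "a \<in> \<sigma> ` {..<k}" using sbij a by (auto simp: bij_betw_def)
      then obtain q where q: "q < k" "a = \<sigma> q" by auto
      then show "a \<in> \<sigma> ` {q. q < k \<and> g q < t}" using a f\<sigma> by auto
    next
      fix a assume "a \<in> \<sigma> ` {q. q < k \<and> g q < t}"
      then obtain q where q: "q < k" "g q < t" "a = \<sigma> q" by auto
      have "\<sigma> q < k" using sbij q by (auto simp: bij_betw_def)
      then show "a \<in> W f t" using q f\<sigma> unfolding W_def by auto
    qed
    then show "W f t = \<sigma> ` {i0..<e t}" using gW[OF t] by simp
  qed
  have fS: "f \<in> Surj {..<k} m"
  proof -
    have "f \<in> {..<k} \<rightarrow>\<^sub>E {..<m}" unfolding f_def using glt by auto
    moreover have "f ` {..<k} = {..<m}"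
    proof
      show "f ` {..<k} \<subseteq> {..<m}" using \<open>f \<in> {..<k} \<rightarrow>\<^sub>E {..<m}\<close> by auto
      show "{..<m} \<subseteq> f ` {..<k}"
      proof
        fix t assume t: "t \<in> {..<m}"
        have "g (e t) = t" using Ct[of t] t i0le[of t] unfolding g_def by auto
        then have "f (\<sigma> (e t)) = t" using f\<sigma> ek t by auto
        moreover have "\<sigma> (e t) \<in> {..<k}" using sbij ek t by (auto simp: bij_betw_def)
        ultimately show "t \<in> f ` {..<k}" by (metis image_eqI)
      qed
    qed
    ultimately show ?thesis unfolding Surj_def by auto
  qed
  define y where "y = p i0"
  have i0k: "i0 < k" using ek m0 unfolding i0_def by simp
  have ptW: "\<And>t. t < m \<Longrightarrow> pt y (W f t) = p (e t)"
  proof -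
    fix t assume t: "t < m"
    have etk: "e t \<le> k" using ek[OF t] by simp
    have un: "\<sigma> ` {..<e t} = \<sigma> ` {..<i0} \<union> \<sigma> ` {i0..<e t}"
      using i0le[OF t] by (auto simp: image_Un[symmetric] intro!: arg_cong[where f="image \<sigma>"])
    have dj: "\<sigma> ` {..<i0} \<inter> \<sigma> ` {i0..<e t} = {}"
    proof -
      have sb: "{..<i0} \<union> {i0..<e t} \<subseteq> {..<k}" using etk i0k by auto
      have inj: "inj_on \<sigma> ({..<i0} \<union> {i0..<e t})" using inj_on_subset[OF sinj sb] .
      have "\<sigma> ` ({..<i0} \<inter> {i0..<e t}) = \<sigma> ` {..<i0} \<inter> \<sigma> ` {i0..<e t}"
        by (rule inj_on_image_Int[OF inj]) auto
      moreover have "{..<i0} \<inter> {i0..<e t} = {}" by auto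
      ultimately show ?thesis by simp
    qed
    have "lw (\<sigma> ` {..<e t}) = lw (\<sigma> ` {..<i0}) + lw (\<sigma> ` {i0..<e t})"
      unfolding un by (rule lw_union) (use sbij etk i0k dj in \<open>auto simp: bij_betw_def\<close>)
    then have "p (e t) = (x + lw (\<sigma> ` {..<i0}) + lw (\<sigma> ` {i0..<e t})) mod n"
      using p_pt[OF etk] by (simp add: pt_def add.assoc)
    also have "\<dots> = pt y (W f t)"
      unfolding Wf[OF t] y_def p_pt[OF less_imp_le[OF i0k]] pt_def by (simp add: mod_add_left_eq)
    finally show "pt y (W f t) = p (e t)" by simp
  qed
  have "Phi y f = p ` (e ` {..<m})" unfolding Phi_def image_image using ptW by (intro image_cong) auto
  then have "Phi y f = S" using e_img SI by simp
  moreover have "y < n" unfolding y_def p_def using n_pos by simp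
  ultimately show ?thesis using fS by blast
qed

end

lemma card_fib:
  assumes fin: "finite D" and fib: "\<forall>x\<in>D. card {x'\<in>D. g x' = g x} = m"
  shows "card D = m * card (g ` D)"
proof -
  have D: "(\<Union>S\<in>g`D. {x\<in>D. g x = S}) = D" by auto
  have "card (\<Union>S\<in>g`D. {x\<in>D. g x = S}) = (\<Sum>S\<in>g`D. card {x\<in>D. g x = S})"
    by (rule card_UN_disjoint) (use fin in auto)
  also have "\<dots> = (\<Sum>S\<in>g`D. m)"
  proof (rule sum.cong)
    fix S assume "S \<in> g ` D"
    then obtain x where x: "x \<in> D" "S = g x" by auto
    show "card {x\<in>D. g x = S} = m" using fib x by simp
  qed simp
  finally show ?thesis unfolding D by simp
qed

theorem proposition2p5:
  fixes L :: "nat list" and k n m :: nat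
  assumes "k \<ge> 2" and "length L = k" and "\<forall>l \<in> set L. l > 0"
    and "sum_list L = n" and "generic L" and "reduced L"
    and "1 \<le> m" and "m \<le> k"
  shows "real (fvec (tonnetz n L) (m - 1)) = real n * real (ordered_partitions k m) / real m
       \<and> real n * real (ordered_partitions k m) / real m
           = real n * real (fact m) / real m * real (Stirling k m)"
proof -
  interpret T: tsetup L k n m by unfold_locales (use assms in auto)
  have PS: "ordered_partitions k m = fact m * Stirling k m"
    using Surj_card[of "{..<k}" m] ordered_partitions_Surj[of k m] by simp
  define Tset where "Tset = {S \<in> tonnetz n L. card S = m}"
  have fv: "fvec (tonnetz n L) (m - 1) = card Tset"
    unfolding fvec_def Tset_def using assms(7) by simp
  define Ph where "Ph = (\<lambda>p. T.Phi (fst p) (snd p))"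
  have img: "Ph ` T.Dom = Tset"
  proof
    show "Ph ` T.Dom \<subseteq> Tset"
    proof
      fix S assume "S \<in> Ph ` T.Dom"
      then obtain y f where yf: "y < n" "f \<in> Surj {..<k} m" "S = T.Phi y f"
        unfolding T.Dom_def Ph_def by auto
      show "S \<in> Tset" unfolding Tset_def yf(3)
        using T.Phi_tonnetz[OF yf(2,1)] T.Phi_card[OF yf(2)] by simp
    qed
    show "Tset \<subseteq> Ph ` T.Dom"
    proof
      fix S assume "S \<in> Tset"
      then have S: "S \<in> tonnetz n L" "card S = m" unfolding Tset_def by auto
      obtain y f where yf: "y < n" "f \<in> Surj {..<k} m" "T.Phi y f = S"
        using T.onto[OF S] by auto
      then have yD: "(y, f) \<in> T.Dom" unfolding T.Dom_def by simp
      have "S = Ph (y, f)" using yf(3) unfolding Ph_def by simp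
      then show "S \<in> Ph ` T.Dom" using yD by (rule image_eqI)
    qed
  qed
  have finD: "finite T.Dom" unfolding T.Dom_def using Surj_finite[of "{..<k}" m] by simp
  have fib: "\<forall>p\<in>T.Dom. card {p'\<in>T.Dom. Ph p' = Ph p} = m"
  proof
    fix p assume "p \<in> T.Dom"
    then have p: "fst p < n" "snd p \<in> Surj {..<k} m" unfolding T.Dom_def by auto
    show "card {p'\<in>T.Dom. Ph p' = Ph p} = m" unfolding Ph_def by (rule T.fiber[OF p(2) p(1)])
  qed
  have "card T.Dom = m * card Tset" using card_fib[OF finD fib] img by simp
  moreover have "card T.Dom = n * ordered_partitions k m"
    unfolding T.Dom_def ordered_partitions_Surj by (simp add: card_cartesian_product)
  ultimately have "m * card Tset = n * ordered_partitions k m" by simp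
  then have "real m * real (card Tset) = real n * real (ordered_partitions k m)"
    by (metis of_nat_mult)
  then have c1: "real (fvec (tonnetz n L) (m - 1)) = real n * real (ordered_partitions k m) / real m"
    unfolding fv using assms(7) by (simp add: field_simps)
  have c2: "real n * real (ordered_partitions k m) / real m
           = real n * real (fact m) / real m * real (Stirling k m)"
    unfolding PS by simp
  show ?thesis by (rule conjI[OF c1 c2])
qed


end
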